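(* Let $V:(0,\infty)\to\mathbb R$ be continuous and satisfy $(V_1)$–$(V_3)$ (see context). Then: (i) $V^+(t)\to\infty$ as $t\to\infty$ and $V^+(t)\to0$ as $t\to0^+$; (ii) $V^-(t)\to0$ as $t\to\infty$; (iii) $V(t)\to\infty$ as $t\to\infty$; (iv) there exists $u_0\in X\setminus\{0\}$ with $P(u_0)<0$.
   Context: $V^+=\max\{V,0\}$, $V^-=\max\{-V,0\}$. $(V_1)$ there are $a_1,a_2:(0,\infty)\to\mathbb R$ with $a_2\in L^\infty$, $\inf_{t\ge2}a_1(t)>0$, $\inf_{t>0}a_2(t)>0$ and $a_1(t)\ln(1+t)\le V^+(t)\le a_2(t)\ln(1+t)$ for all $t>0$; $(V_2)$ there is $a_3:(0,\infty)\to\mathbb R$, positive on a set of positive measure, with $V^-(t)\le a_3(t)/t$ for all $t>0$, and either $a_3\in L^\infty$ or $a_3(t)=t^{-\lambda}$ for all $t>0$ for some $\lambda\in[1,3)$; $(V_3)$ there is an open set $\mathcal I\subset(0,\infty)$ with $V(t)<0$ for all $t\in\mathcal I$. $X=\{u\in H^1(\mathbb R^2):\int_{\mathbb R^2}\ln(1+|x|)u^2\,dx<\infty\}$ and $P(u)=\int_{\mathbb R^2}\int_{\mathbb R^2}V(|x-y|)u^2(x)u^2(y)\,dx\,dy$. *)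

theory Defs
  imports "HOL-Analysis.Analysis"
begin

definition Vplus :: "(real \<Rightarrow> real) \<Rightarrow> real \<Rightarrow> real" where
  "Vplus V t = max (V t) 0"

definition Vminus :: "(real \<Rightarrow> real) \<Rightarrow> real \<Rightarrow> real" where
  "Vminus V t = max (- V t) 0"

definition Linf_pos :: "(real \<Rightarrow> real) \<Rightarrow> bool" where
  "Linf_pos a \<longleftrightarrow> set_borel_measurable lebesgue {0<..} a \<and>
     (\<exists>M. AE t in lebesgue. t \<in> {0<..} \<longrightarrow> \<bar>a t\<bar> \<le> M)"

definition pderiv2 :: "2 \<Rightarrow> (real^2 \<Rightarrow> real) \<Rightarrow> real^2 \<Rightarrow> real" where
  "pderiv2 i f x = frechet_derivative f (at x) (axis i 1)"

fun iter_pderiv2 :: "2 list \<Rightarrow> (real^2 \<Rightarrow> real) \<Rightarrow> real^2 \<Rightarrow> real" where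
  "iter_pderiv2 [] f = f"
| "iter_pderiv2 (i # is) f = pderiv2 i (iter_pderiv2 is f)"

definition smooth2 :: "(real^2 \<Rightarrow> real) \<Rightarrow> bool" where
  "smooth2 f \<longleftrightarrow> (\<forall>is x. iter_pderiv2 is f differentiable (at x))"

definition test_fun2 :: "(real^2 \<Rightarrow> real) \<Rightarrow> bool" where
  "test_fun2 \<phi> \<longleftrightarrow> smooth2 \<phi> \<and> bounded {x. \<phi> x \<noteq> 0}"

definition weak_pderiv2 :: "2 \<Rightarrow> (real^2 \<Rightarrow> real) \<Rightarrow> (real^2 \<Rightarrow> real) \<Rightarrow> bool" where
  "weak_pderiv2 i u g \<longleftrightarrow> (\<forall>\<phi>. test_fun2 \<phi> \<longrightarrow>
     (\<integral>x. u x * pderiv2 i \<phi> x \<partial>lebesgue) = - (\<integral>x. g x * \<phi> x \<partial>lebesgue))"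

definition L2 :: "(real^2 \<Rightarrow> real) \<Rightarrow> bool" where
  "L2 u \<longleftrightarrow> u \<in> borel_measurable lebesgue \<and> integrable lebesgue (\<lambda>x. (u x)^2)"

text \<open>Sobolev space H^1(R^2) (functions as representatives).\<close>
definition H1 :: "(real^2 \<Rightarrow> real) set" where
  "H1 = {u. L2 u \<and> (\<forall>i. \<exists>g. L2 g \<and> weak_pderiv2 i u g)}"

definition Xsp :: "(real^2 \<Rightarrow> real) set" where
  "Xsp = {u \<in> H1. integrable lebesgue (\<lambda>x. ln (1 + norm x) * (u x)^2)}"

definition Pfun :: "(real \<Rightarrow> real) \<Rightarrow> (real^2 \<Rightarrow> real) \<Rightarrow> ereal" where
  "Pfun V u =
     enn2ereal (\<integral>\<^sup>+x. \<integral>\<^sup>+y. ennreal (Vplus V (norm (x - y)) * (u x)^2 * (u y)^2) \<partial>lebesgue \<partial>lebesgue)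
   - enn2ereal (\<integral>\<^sup>+x. \<integral>\<^sup>+y. ennreal (Vminus V (norm (x - y)) * (u x)^2 * (u y)^2) \<partial>lebesgue \<partial>lebesgue)"

end

theory Submission
  imports Defs "HOL-Real_Asymp.Real_Asymp"
begin


lemma cc_integrable_lborel:
  fixes f :: "real^2 \<Rightarrow> real"
  assumes "continuous_on UNIV f" "\<And>x. R < norm x \<Longrightarrow> f x = 0"
  shows "integrable lborel f"
proof -
  have "integrable lborel (\<lambda>x. indicator (cball 0 R) x *\<^sub>R f x)"
    by (rule borel_integrable_compact) (auto intro: continuous_on_subset[OF assms(1)])
  moreover have "(\<lambda>x. indicator (cball 0 R) x *\<^sub>R f x) = f"
    using assms(2) by (auto simp: indicator_def fun_eq_iff)
  ultimately show ?thesis by simp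
qed

lemma cc_integrable:
  fixes f :: "real^2 \<Rightarrow> real"
  assumes "continuous_on UNIV f" "\<And>x. R < norm x \<Longrightarrow> f x = 0"
  shows "integrable lebesgue f"
  using cc_integrable_lborel[OF assms] assms(1)
  by (subst integrable_completion) (auto intro: borel_measurable_continuous_onI)

lemma integral_translate:
  fixes f :: "real^2 \<Rightarrow> real"
  assumes "f \<in> borel_measurable borel"
  shows "integral\<^sup>L lborel (\<lambda>x. f (c + x)) = integral\<^sup>L lborel f"
proof -
  have "integral\<^sup>L lborel f = integral\<^sup>L (distr lborel borel ((+) c)) f"
    by (simp add: lborel_distr_plus)
  also have "\<dots> = integral\<^sup>L lborel (\<lambda>x. f (c + x))"
    using assms by (subst integral_distr) auto
  finally show ?thesis by simp
qed

lemma nn_integral_translate: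
  fixes f :: "real^2 \<Rightarrow> ennreal"
  assumes "f \<in> borel_measurable borel"
  shows "integral\<^sup>N lborel (\<lambda>x. f (c + x)) = integral\<^sup>N lborel f"
proof -
  have "integral\<^sup>N lborel f = integral\<^sup>N (distr lborel borel ((+) c)) f"
    by (simp add: lborel_distr_plus)
  also have "\<dots> = integral\<^sup>N lborel (\<lambda>x. f (c + x))"
    using assms by (subst nn_integral_distr) auto
  finally show ?thesis by simp
qed


lemma ibp_zero:
  fixes w D :: "real^2 \<Rightarrow> real" and e :: "real^2"
  assumes cw: "continuous_on UNIV w" and cD: "continuous_on UNIV D"
    and ne: "norm e = 1"
    and supp: "\<And>x. R < norm x \<Longrightarrow> w x = 0 \<and> D x = 0"
    and der: "\<And>x t. ((\<lambda>s. w (x + s *\<^sub>R e)) has_real_derivative D (x + t *\<^sub>R e)) (at t)"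
  shows "integral\<^sup>L lebesgue D = 0"
proof -
  have Dm: "D \<in> borel_measurable borel" using cD by (intro borel_measurable_continuous_onI)
  have wm: "w \<in> borel_measurable borel" using cw by (intro borel_measurable_continuous_onI)
  have eqL: "integral\<^sup>L lebesgue D = integral\<^sup>L lborel D"
    using Dm by (simp add: integral_completion)
  define K where "K = cball (0::real^2) (R+1)"
  define C where "C = measure lborel K"
  have C0: "C \<ge> 0" by (simp add: C_def)
  have Kfin: "emeasure lborel K < \<infinity>" unfolding K_def by (intro emeasure_compact_finite) auto
  have intK: "integrable lborel (indicator K :: real^2 \<Rightarrow> real)"
    using Kfin by (intro integrable_real_indicator) (auto simp: K_def)
  have intD: "integrable lborel D" by (rule cc_integrable_lborel[OF cD]) (use supp in auto)
  have bound: "\<bar>integral\<^sup>L lborel D\<bar> \<le> \<epsilon> * C" if ep: "\<epsilon> > 0" for \<epsilon>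
  proof -
    have "uniformly_continuous_on (cball 0 (R+2)) D"
      by (intro compact_uniformly_continuous continuous_on_subset[OF cD]) auto
    then obtain d where d: "d > 0" and
      dD: "\<And>x y. x \<in> cball 0 (R+2) \<Longrightarrow> y \<in> cball 0 (R+2) \<Longrightarrow> dist y x < d \<Longrightarrow> dist (D y) (D x) < \<epsilon>"
      using ep unfolding uniformly_continuous_on_def by metis
    define h where "h = min 1 (d/2)"
    have h: "h > 0" "h \<le> 1" "h < d" using d by (auto simp: h_def)
    define Q where "Q x = (w (x + h *\<^sub>R e) - w x) / h" for x
    have cQ: "continuous_on UNIV Q" unfolding Q_def using h
      by (intro continuous_intros continuous_on_compose2[OF cw] cw) auto
    have Q0: "Q x = 0" if "R + 1 < norm x" for x
    proof -
      have "norm x - norm (h *\<^sub>R e) \<le> norm (x + h *\<^sub>R e)" by (rule norm_diff_ineq)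
      then have "norm x - h \<le> norm (x + h *\<^sub>R e)" using ne h by simp
      then have "R < norm (x + h *\<^sub>R e)" using that h by linarith
      then show ?thesis using supp[of x] supp[of "x + h *\<^sub>R e"] that by (simp add: Q_def)
    qed
    have intQ: "integrable lborel Q" by (rule cc_integrable_lborel[OF cQ]) (use Q0 in auto)
    have intsh: "integrable lborel (\<lambda>x. w (x + h *\<^sub>R e))"
      by (rule cc_integrable_lborel[where R="R+1"]) 
         (auto intro!: continuous_on_compose2[OF cw] continuous_intros,
          use Q0[unfolded Q_def] supp h in fastforce)
    have "integral\<^sup>L lborel (\<lambda>x. w (x + h *\<^sub>R e)) = integral\<^sup>L lborel w"
      using integral_translate[OF wm, of "h *\<^sub>R e"] by (simp add: add.commute)
    then have IQ: "integral\<^sup>L lborel Q = 0"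
      unfolding Q_def using intsh cc_integrable_lborel[OF cw, of R] supp
      by (simp add: integral_diff)
    have pt: "\<bar>D x - Q x\<bar> \<le> \<epsilon> * indicator K x" for x
    proof (cases "R + 1 < norm x")
      case True
      then show ?thesis using Q0[OF True] supp[of x] ep by (simp add: indicator_def)
    next
      case False
      then have xK: "x \<in> K" by (simp add: K_def)
      have "\<exists>z. 0 < z \<and> z < h \<and> w (x + h *\<^sub>R e) - w (x + 0 *\<^sub>R e) = (h - 0) * D (x + z *\<^sub>R e)"
        by (rule MVT2[OF h(1)]) (use der in auto)
      then obtain z where z: "0 < z" "z < h" "w (x + h *\<^sub>R e) - w x = h * D (x + z *\<^sub>R e)" by auto
      have Qx: "Q x = D (x + z *\<^sub>R e)" using z h by (simp add: Q_def)
      have "norm (x + z *\<^sub>R e) \<le> norm x + z" using norm_triangle_ineq[of x "z *\<^sub>R e"] ne z by simp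
      then have "x + z *\<^sub>R e \<in> cball 0 (R+2)" using False z h by simp
      moreover have "x \<in> cball 0 (R+2)" using False by simp
      moreover have "dist (x + z *\<^sub>R e) x < d" using z h ne by (simp add: dist_norm)
      ultimately have "dist (D (x + z *\<^sub>R e)) (D x) < \<epsilon>" using dD by blast
      then show ?thesis using Qx xK by (simp add: dist_real_def)
    qed
    have "\<bar>integral\<^sup>L lborel D\<bar> = \<bar>integral\<^sup>L lborel (\<lambda>x. D x - Q x)\<bar>"
      using IQ intD intQ by (simp add: integral_diff)
    also have "\<dots> \<le> integral\<^sup>L lborel (\<lambda>x. \<bar>D x - Q x\<bar>)"
      using integral_norm_bound[of lborel "\<lambda>x. D x - Q x"] by simp
    also have "\<dots> \<le> integral\<^sup>L lborel (\<lambda>x. \<epsilon> * indicator K x)"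
      using pt intD intQ intK by (intro integral_mono) auto
    also have "\<dots> = \<epsilon> * C" by (simp add: C_def)
    finally show ?thesis .
  qed
  have "integral\<^sup>L lborel D = 0"
  proof (rule ccontr)
    assume "integral\<^sup>L lborel D \<noteq> 0"
    then have a: "\<bar>integral\<^sup>L lborel D\<bar> > 0" by simp
    have "\<bar>integral\<^sup>L lborel D\<bar> \<le> (\<bar>integral\<^sup>L lborel D\<bar> / (C+1)) * C"
      using bound[of "\<bar>integral\<^sup>L lborel D\<bar> / (C+1)"] a C0 by simp
    also have "\<dots> < \<bar>integral\<^sup>L lborel D\<bar>" using a C0 by (simp add: field_simps)
    finally show False by simp
  qed
  then show ?thesis using eqL by simp
qed

lemma cont_lebesgue_meas:
  fixes f :: "real^2 \<Rightarrow> real"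
  assumes "continuous_on UNIV f"
  shows "f \<in> borel_measurable lebesgue"
proof -
  have "f \<in> borel_measurable borel" using assms by (intro borel_measurable_continuous_onI)
  then have "f \<in> borel_measurable lborel" by simp
  then show ?thesis by (rule measurable_completion)
qed

lemma line_deriv:
  fixes f :: "real^2 \<Rightarrow> real"
  assumes "(f has_derivative f') (at (x + t *\<^sub>R e))"
  shows "((\<lambda>s. f (x + s *\<^sub>R e)) has_real_derivative f' e) (at t)"
proof -
  have l: "((\<lambda>s. x + s *\<^sub>R e) has_derivative (\<lambda>s. s *\<^sub>R e)) (at t)"
    by (auto intro!: derivative_eq_intros)
  have "((\<lambda>s. f (x + s *\<^sub>R e)) has_derivative (\<lambda>s. f' (s *\<^sub>R e))) (at t)"
    using has_derivative_compose[OF l assms] by (simp add: o_def)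
  moreover have "linear f'" using assms by (rule has_derivative_linear)
  then have "(\<lambda>s. f' (s *\<^sub>R e)) = (\<lambda>s. s * f' e)"
    by (auto simp: linear_scale fun_eq_iff)
  moreover have "(*) (f' e) = (\<lambda>s. s * f' e)" by (auto simp: fun_eq_iff)
  ultimately show ?thesis by (simp add: has_field_derivative_def)
qed

lemma weak_of_C1:
  fixes u :: "real^2 \<Rightarrow> real" and du :: "real^2 \<Rightarrow> real^2 \<Rightarrow> real"
  assumes ud: "\<And>x. (u has_derivative du x) (at x)"
    and cdu: "continuous_on UNIV (\<lambda>x. du x (axis i 1))"
    and supp: "\<And>x. R < norm x \<Longrightarrow> u x = 0 \<and> du x (axis i 1) = 0"
  shows "weak_pderiv2 i u (\<lambda>x. du x (axis i 1))"
  unfolding weak_pderiv2_def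
proof (intro allI impI)
  fix \<phi> assume t: "test_fun2 \<phi>"
  have sm: "\<And>is x. iter_pderiv2 is \<phi> differentiable (at x)"
    using t by (auto simp: test_fun2_def smooth2_def)
  have pd: "\<And>x. \<phi> differentiable (at x)" using sm[of "[]"] by simp
  have pd2: "\<And>x. pderiv2 i \<phi> differentiable (at x)" using sm[of "[i]"] by simp
  have cpd: "continuous_on UNIV (pderiv2 i \<phi>)"
    using pd2 by (intro continuous_at_imp_continuous_on) (auto intro: differentiable_imp_continuous_within)
  have cphi: "continuous_on UNIV \<phi>"
    using pd by (intro continuous_at_imp_continuous_on) (auto intro: differentiable_imp_continuous_within)
  have cu: "continuous_on UNIV u"
    using ud by (intro continuous_at_imp_continuous_on) (auto intro: has_derivative_continuous)
  define e :: "real^2" where "e = axis i 1"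
  define D where "D y = du y e * \<phi> y + u y * pderiv2 i \<phi> y" for y
  have wd: "((\<lambda>y. u y * \<phi> y) has_derivative (\<lambda>v. u y * frechet_derivative \<phi> (at y) v + du y v * \<phi> y)) (at y)" for y
    using has_derivative_mult[OF ud frechet_derivative_works[THEN iffD1, OF pd]] by simp
  have der: "((\<lambda>s. u (x + s *\<^sub>R e) * \<phi> (x + s *\<^sub>R e)) has_real_derivative D (x + t *\<^sub>R e)) (at t)" for x t
    using line_deriv[OF wd[of "x + t *\<^sub>R e"]]
    by (simp add: D_def pderiv2_def e_def algebra_simps)
  have cD: "continuous_on UNIV D" unfolding D_def e_def
    by (intro continuous_intros cdu cphi cu cpd)
  have "integral\<^sup>L lebesgue D = 0"
  proof (rule ibp_zero[where w="\<lambda>y. u y * \<phi> y" and e=e and R=R])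
    show "continuous_on UNIV (\<lambda>y. u y * \<phi> y)" by (intro continuous_intros cu cphi)
  qed (use cD der supp in \<open>auto simp: e_def D_def\<close>)
  moreover have i1: "integrable lebesgue (\<lambda>y. du y e * \<phi> y)"
    by (rule cc_integrable[where R=R]) (use supp in \<open>auto simp: e_def intro!: continuous_intros cdu cphi\<close>)
  moreover have i2: "integrable lebesgue (\<lambda>y. u y * pderiv2 i \<phi> y)"
    by (rule cc_integrable[where R=R]) (use supp in \<open>auto intro!: continuous_intros cu cpd\<close>)
  ultimately have "integral\<^sup>L lebesgue (\<lambda>y. du y e * \<phi> y) + integral\<^sup>L lebesgue (\<lambda>y. u y * pderiv2 i \<phi> y) = 0"
    unfolding D_def by (simp add: integral_add)
  then show "(\<integral>x. u x * pderiv2 i \<phi> x \<partial>lebesgue) = - (\<integral>x. du x (axis i 1) * \<phi> x \<partial>lebesgue)"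
    by (simp add: e_def)
qed


lemma gder: "((\<lambda>s::real. (max 0 s)^2) has_real_derivative 2 * max 0 s) (at s)"
proof -
  consider "s > 0" | "s < 0" | "s = 0" by linarith
  then show ?thesis
  proof cases
    case 1
    have d: "((\<lambda>s::real. s^2) has_real_derivative 2 * s) (at s)"
      by (auto intro!: derivative_eq_intros)
    have ev: "eventually (\<lambda>t. (max 0 t)^2 = t^2) (nhds s)"
      using eventually_nhds_in_open[of "{0<..}" s] 1 by (auto elim!: eventually_mono)
    have "((\<lambda>s::real. (max 0 s)^2) has_real_derivative 2 * s) (at s)"
      by (subst DERIV_cong_ev[OF refl ev refl]) (rule d)
    then show ?thesis using 1 by simp
  next
    case 2
    have d: "((\<lambda>s::real. 0) has_real_derivative 0) (at s)"
      by (auto intro!: derivative_eq_intros)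
    have ev: "eventually (\<lambda>t. (max 0 t)^2 = (0::real)) (nhds s)"
      using eventually_nhds_in_open[of "{..<0}" s] 2 by (auto elim!: eventually_mono)
    have "((\<lambda>s::real. (max 0 s)^2) has_real_derivative 0) (at s)"
      by (subst DERIV_cong_ev[OF refl ev refl]) (rule d)
    then show ?thesis using 2 by simp
  next
    case 3
    have e: "(\<lambda>h::real. ((max 0 (0 + h))^2 - (max 0 0)^2) / h) = (\<lambda>h. max 0 h)"
      by (auto simp: fun_eq_iff max_def power2_eq_square)
    have "((\<lambda>h::real. max 0 h) \<longlongrightarrow> max 0 0) (at 0)"
      by (intro tendsto_max tendsto_const tendsto_ident_at)
    then have l: "((\<lambda>h::real. ((max 0 (0 + h))^2 - (max 0 0)^2) / h) \<longlongrightarrow> 0) (at 0)"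
      unfolding e by simp
    have "((\<lambda>s::real. (max 0 s)^2) has_real_derivative 0) (at 0)"
      unfolding DERIV_def by (rule l)
    then show ?thesis using 3 by simp
  qed
qed

definition bump :: "real^2 \<Rightarrow> real \<Rightarrow> real^2 \<Rightarrow> real" where
  "bump c \<epsilon> x = (max 0 (\<epsilon>^2 - (x - c) \<bullet> (x - c)))^2"

definition dbump :: "real^2 \<Rightarrow> real \<Rightarrow> real^2 \<Rightarrow> real^2 \<Rightarrow> real" where
  "dbump c \<epsilon> x v = -4 * max 0 (\<epsilon>^2 - (x - c) \<bullet> (x - c)) * ((x - c) \<bullet> v)"

lemma bump_deriv: "(bump c \<epsilon> has_derivative dbump c \<epsilon> x) (at x)"
proof -
  have i: "((\<lambda>x. \<epsilon>^2 - (x - c) \<bullet> (x - c)) has_derivative (\<lambda>v. - (2 * ((x - c) \<bullet> v)))) (at x)"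
    by (auto intro!: derivative_eq_intros simp: inner_commute)
  have "(bump c \<epsilon> has_derivative (\<lambda>xa. - (4 * (max 0 (\<epsilon>\<^sup>2 - (x - c) \<bullet> (x - c)) * ((x - c) \<bullet> xa))))) (at x)"
    unfolding bump_def
    using has_derivative_compose[OF i gder[of "\<epsilon>^2 - (x - c) \<bullet> (x - c)", unfolded has_field_derivative_def]]
    by (simp add: o_def)
  moreover have "(\<lambda>xa. - (4 * (max 0 (\<epsilon>\<^sup>2 - (x - c) \<bullet> (x - c)) * ((x - c) \<bullet> xa)))) = dbump c \<epsilon> x"
    by (auto simp: fun_eq_iff dbump_def algebra_simps)
  ultimately show ?thesis by simp
qed

lemma bump_cont: "continuous_on UNIV (bump c \<epsilon>)"
  unfolding bump_def by (intro continuous_intros)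

lemma dbump_cont: "continuous_on UNIV (\<lambda>x. dbump c \<epsilon> x v)"
  unfolding dbump_def by (intro continuous_intros)

lemma inner_self_norm: "(x::real^2) \<bullet> x = (norm x)^2"
  by (simp add: power2_norm_eq_inner)

lemma bump_zero: "\<epsilon> \<le> norm (x - c) \<Longrightarrow> 0 \<le> \<epsilon> \<Longrightarrow> bump c \<epsilon> x = 0 \<and> dbump c \<epsilon> x v = 0"
proof -
  assume a: "\<epsilon> \<le> norm (x - c)" "0 \<le> \<epsilon>"
  have "\<epsilon>^2 \<le> (norm (x - c))^2" using a by (intro power_mono) auto
  then show ?thesis unfolding bump_def dbump_def inner_self_norm by simp
qed

lemma bump_pos: "norm (x - c) < \<epsilon> \<Longrightarrow> bump c \<epsilon> x > 0"
proof -
  assume a: "norm (x - c) < \<epsilon>"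
  have "(norm (x - c))^2 < \<epsilon>^2" using a by (intro power_strict_mono) auto
  then show ?thesis unfolding bump_def inner_self_norm by simp
qed

lemma bump_nonneg: "bump c \<epsilon> x \<ge> 0"
  unfolding bump_def by simp




lemma AE_contra:
  fixes S :: "'a::euclidean_space set"
  assumes "AE x in lebesgue. P x" "S \<in> sets borel" "emeasure lborel S > 0" "\<forall>x\<in>S. \<not> P x"
  shows False
proof -
  from assms(1) obtain N where N: "{x \<in> space lebesgue. \<not> P x} \<subseteq> N" "emeasure lebesgue N = 0" "N \<in> sets lebesgue"
    by (auto elim!: AE_E)
  have "S \<subseteq> N" using N(1) assms(4) by auto
  then have "emeasure lebesgue S \<le> emeasure lebesgue N" by (intro emeasure_mono N(3))
  moreover have "emeasure lebesgue S = emeasure lborel S" using assms(2) by simp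
  ultimately show False using N(2) assms(3) by simp
qed

lemma Vplus_cont:
  assumes "continuous_on {0<..} V"
  shows "continuous_on {0<..} (Vplus V)"
  unfolding Vplus_def[abs_def] by (intro continuous_intros assms)

lemma Vplus_le_M:
  fixes V a2 :: "real \<Rightarrow> real"
  assumes cont: "continuous_on {0<..} V" and L: "Linf_pos a2"
    and V1: "\<forall>t>0. Vplus V t \<le> a2 t * ln (1 + t)"
  shows "\<exists>M. \<forall>t>0. Vplus V t \<le> M * ln (1 + t)"
proof -
  obtain M where M: "AE t in lebesgue. t \<in> {0<..} \<longrightarrow> \<bar>a2 t\<bar> \<le> M"
    using L by (auto simp: Linf_pos_def)
  have "Vplus V t0 \<le> M * ln (1 + t0)" if t0: "t0 > 0" for t0
  proof (rule ccontr)
    assume "\<not> ?thesis"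
    then have pos: "Vplus V t0 - M * ln (1 + t0) > 0" by simp
    define F where "F t = Vplus V t - M * ln (1 + t)" for t
    have "continuous_on {0<..} F" unfolding F_def
      by (intro continuous_intros Vplus_cont cont) auto
    then have "isCont F t0" using t0 by (simp add: continuous_on_eq_continuous_at)
    then have lim: "(F \<longlongrightarrow> F t0) (at t0)" by (simp add: isCont_def)
    have "F t0 > 0" using pos by (simp add: F_def)
    from order_tendstoD(1)[OF lim this] have "eventually (\<lambda>t. F t > 0) (at t0)" .
    then obtain d where d: "d > 0" "\<And>t. t \<noteq> t0 \<Longrightarrow> dist t t0 < d \<Longrightarrow> F t > 0"
      by (auto simp: eventually_at)
    show False
    proof (rule AE_contra[OF M, of "{t0<..<t0+d}"])
      show "\<forall>t\<in>{t0<..<t0+d}. \<not> (t \<in> {0<..} \<longrightarrow> \<bar>a2 t\<bar> \<le> M)"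
      proof
        fix t assume t: "t \<in> {t0<..<t0+d}"
        then have tp: "t > 0" "dist t t0 < d" "t \<noteq> t0" using t0 by (auto simp: dist_real_def)
        have l: "ln (1 + t) > 0" using tp by simp
        have "M * ln (1 + t) < Vplus V t" using d(2)[OF tp(3,2)] by (simp add: F_def)
        also have "\<dots> \<le> a2 t * ln (1 + t)" using V1 tp by auto
        finally have "M < a2 t" using l by simp
        then show "\<not> (t \<in> {0<..} \<longrightarrow> \<bar>a2 t\<bar> \<le> M)" using tp by auto
      qed
    qed (use d in auto)
  qed
  then show ?thesis by blast
qed

lemma part_i_top:
  assumes "\<exists>c>0. \<forall>t\<ge>2. a1 t \<ge> c" "\<forall>t>0. a1 t * ln (1 + t) \<le> Vplus V t"
  shows "filterlim (Vplus V) at_top at_top"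
proof -
  obtain c where c: "c > 0" "\<forall>t\<ge>2. a1 t \<ge> c" using assms(1) by auto
  have "filterlim (\<lambda>t::real. c * ln (1 + t)) at_top at_top" using c(1) by real_asymp
  moreover have "eventually (\<lambda>t. c * ln (1 + t) \<le> Vplus V t) at_top"
    using eventually_ge_at_top[of "2::real"]
  proof (rule eventually_mono)
    fix t :: real assume t: "2 \<le> t"
    have "c * ln (1 + t) \<le> a1 t * ln (1 + t)" using c t by (intro mult_right_mono) auto
    also have "\<dots> \<le> Vplus V t" using assms(2) t by auto
    finally show "c * ln (1 + t) \<le> Vplus V t" .
  qed
  ultimately show ?thesis by (rule filterlim_at_top_mono)
qed

lemma part_i_zero:
  assumes "\<forall>t>0. Vplus V t \<le> M * ln (1 + t)"
  shows "(Vplus V \<longlongrightarrow> 0) (at_right 0)"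
proof (rule tendsto_sandwich[where f="\<lambda>_. 0" and h="\<lambda>t. M * ln (1 + t)"])
  show "eventually (\<lambda>t. 0 \<le> Vplus V t) (at_right 0)" by (simp add: Vplus_def)
  show "eventually (\<lambda>t. Vplus V t \<le> M * ln (1 + t)) (at_right 0)"
    using assms by (auto simp: eventually_at_right_field intro!: exI[of _ 1])
  show "((\<lambda>t. M * ln (1 + t)) \<longlongrightarrow> 0) (at_right (0::real))" by real_asymp
qed simp

lemma part_ii_iii:
  assumes "filterlim (Vplus V) at_top at_top"
  shows "(Vminus V \<longlongrightarrow> 0) at_top \<and> filterlim V at_top at_top"
proof -
  have ev: "eventually (\<lambda>t. Vplus V t \<ge> 1) at_top" using assms by (simp add: filterlim_at_top)
  have ev2: "eventually (\<lambda>t. V t > 0) at_top"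
    using ev by (rule eventually_mono) (auto simp: Vplus_def max_def split: if_splits)
  have "eventually (\<lambda>t. Vminus V t = 0) at_top"
    using ev2 by (rule eventually_mono) (auto simp: Vminus_def)
  then have "(Vminus V \<longlongrightarrow> 0) at_top" by (rule tendsto_eventually)
  moreover have "filterlim V at_top at_top"
    using assms by (rule filterlim_at_top_mono) (use ev2 in \<open>auto simp: Vplus_def elim!: eventually_mono\<close>)
  ultimately show ?thesis by simp
qed



lemma bump_support:
  fixes q :: "real^2"
  assumes "bump c \<epsilon> x \<noteq> 0" "0 \<le> \<epsilon>"
  shows "norm (x - c) < \<epsilon>"
  using bump_zero[of \<epsilon> x c] assms by force

lemma u_in_Xsp:
  fixes q :: "real^2"
  assumes e: "\<epsilon> > 0"
  defines "u \<equiv> \<lambda>x. bump 0 \<epsilon> x + bump q \<epsilon> x"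
  shows "u \<in> Xsp"
proof -
  define R where "R = norm q + \<epsilon>"
  have supp: "bump 0 \<epsilon> x = 0 \<and> bump q \<epsilon> x = 0 \<and> dbump 0 \<epsilon> x v = 0 \<and> dbump q \<epsilon> x v = 0"
    if "R < norm x" for x v
  proof -
    have "\<epsilon> \<le> norm x" using that norm_ge_zero[of q] unfolding R_def by linarith
    then have "\<epsilon> \<le> norm (x - 0)" by simp
    moreover have "\<epsilon> \<le> norm (x - q)" using that norm_triangle_ineq2[of x q] by (simp add: R_def)
    ultimately show ?thesis using bump_zero[of \<epsilon> x 0 v] bump_zero[of \<epsilon> x q v] e by auto
  qed
  have cu: "continuous_on UNIV u" unfolding u_def by (intro continuous_intros bump_cont)
  define du where "du x v = dbump 0 \<epsilon> x v + dbump q \<epsilon> x v" for x v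
  have ud: "(u has_derivative du x) (at x)" for x
    unfolding u_def du_def by (intro has_derivative_add bump_deriv)
  have cdu: "continuous_on UNIV (\<lambda>x. du x v)" for v
    unfolding du_def by (intro continuous_intros dbump_cont)
  have L2u: "L2 u" unfolding L2_def
    by (auto intro!: cont_lebesgue_meas cu cc_integrable[where R=R] continuous_intros bump_cont simp: u_def supp)
  have "\<exists>g. L2 g \<and> weak_pderiv2 i u g" for i
  proof (intro exI conjI)
    show "L2 (\<lambda>x. du x (axis i 1))" unfolding L2_def
      by (auto intro!: cont_lebesgue_meas cdu cc_integrable[where R=R] continuous_intros dbump_cont simp: du_def supp)
    show "weak_pderiv2 i u (\<lambda>x. du x (axis i 1))"
      by (rule weak_of_C1[OF ud cdu, where R=R]) (auto simp: u_def du_def supp)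
  qed
  then have "u \<in> H1" using L2u by (auto simp: H1_def)
  moreover have "integrable lebesgue (\<lambda>x. ln (1 + norm x) * (u x)^2)"
    by (rule cc_integrable[where R=R]) (auto intro!: continuous_intros cu bump_cont simp: u_def supp, smt (verit) norm_ge_zero)
  ultimately show ?thesis by (simp add: Xsp_def)
qed



lemma ereal_fin: 
  fixes x y :: ereal
  assumes "0 \<le> x" "x \<le> ereal A" "ereal B \<le> y" "A < B"
  shows "x - y < 0"
  using assms by (cases x; cases y) auto

lemma P_neg:
  fixes u1 u2 :: "real^2 \<Rightarrow> real" and V :: "real \<Rightarrow> real"
  assumes m1[measurable]: "u1 \<in> borel_measurable lebesgue" and m2[measurable]: "u2 \<in> borel_measurable lebesgue"
    and i1: "(\<integral>\<^sup>+x. ennreal ((u1 x)^2) \<partial>lebesgue) = ennreal m"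
    and i2: "(\<integral>\<^sup>+x. ennreal ((u2 x)^2) \<partial>lebesgue) = ennreal m"
    and mpos: "m > 0"
    and disj: "\<And>x. u1 x = 0 \<or> u2 x = 0"
    and up: "\<And>x y. x \<noteq> y \<Longrightarrow> Vplus V (norm (x - y)) * (u1 x + u2 x)^2 * (u1 y + u2 y)^2
                 \<le> \<eta> * (u1 x + u2 x)^2 * (u1 y + u2 y)^2"
    and lo: "\<And>x y. \<delta> * ((u1 x)^2 * (u2 y)^2 + (u2 x)^2 * (u1 y)^2)
                 \<le> Vminus V (norm (x - y)) * (u1 x + u2 x)^2 * (u1 y + u2 y)^2"
    and eta: "\<eta> \<ge> 0" and del: "2 * \<eta> < \<delta>"
  shows "Pfun V (\<lambda>x. u1 x + u2 x) < 0"
proof -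
  define F1 where "F1 x = ennreal ((u1 x)^2)" for x
  define F2 where "F2 x = ennreal ((u2 x)^2)" for x
  have [measurable]: "F1 \<in> borel_measurable lebesgue" "F2 \<in> borel_measurable lebesgue"
    unfolding F1_def[abs_def] F2_def[abs_def] by measurable
  have sq: "(u1 x + u2 x)^2 = (u1 x)^2 + (u2 x)^2" for x
    using disj[of x] by (auto simp: power2_eq_square)
  have U: "ennreal ((u1 x + u2 x)^2) = F1 x + F2 x" for x
    unfolding sq F1_def F2_def by (simp add: ennreal_plus)
  have IF1: "integral\<^sup>N lebesgue F1 = ennreal m" using i1 by (simp add: F1_def[abs_def])
  have IF2: "integral\<^sup>N lebesgue F2 = ennreal m" using i2 by (simp add: F2_def[abs_def])
  have IU: "(\<integral>\<^sup>+y. F1 y + F2 y \<partial>lebesgue) = ennreal (2 * m)"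
    using mpos by (simp add: nn_integral_add IF1 IF2 ennreal_plus[symmetric])
  define PP where "PP = (\<integral>\<^sup>+x. \<integral>\<^sup>+y. ennreal (Vplus V (norm (x - y)) * (u1 x + u2 x)^2 * (u1 y + u2 y)^2) \<partial>lebesgue \<partial>lebesgue)"
  define NN where "NN = (\<integral>\<^sup>+x. \<integral>\<^sup>+y. ennreal (Vminus V (norm (x - y)) * (u1 x + u2 x)^2 * (u1 y + u2 y)^2) \<partial>lebesgue \<partial>lebesgue)"
  have "PP \<le> (\<integral>\<^sup>+x. \<integral>\<^sup>+y. (ennreal \<eta> * (F1 x + F2 x)) * (F1 y + F2 y) \<partial>lebesgue \<partial>lebesgue)"
    unfolding PP_def
  proof (rule nn_integral_mono, rule nn_integral_mono_AE)
    fix x :: "real^2"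
    have "AE y in lborel. y \<noteq> x" by (rule AE_lborel_singleton)
    then have "AE y in lebesgue. y \<noteq> x" by (rule AE_completion)
    then show "AE y in lebesgue. ennreal (Vplus V (norm (x - y)) * (u1 x + u2 x)^2 * (u1 y + u2 y)^2)
       \<le> (ennreal \<eta> * (F1 x + F2 x)) * (F1 y + F2 y)"
    proof (rule eventually_mono)
      fix y :: "real^2" assume "y \<noteq> x"
      then have "ennreal (Vplus V (norm (x - y)) * (u1 x + u2 x)^2 * (u1 y + u2 y)^2)
          \<le> ennreal (\<eta> * (u1 x + u2 x)^2 * (u1 y + u2 y)^2)"
        using up[of x y] by (intro ennreal_leI) auto
      also have "\<dots> = (ennreal \<eta> * (F1 x + F2 x)) * (F1 y + F2 y)"
        using eta by (simp add: U[symmetric] ennreal_mult)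
      finally show "ennreal (Vplus V (norm (x - y)) * (u1 x + u2 x)^2 * (u1 y + u2 y)^2)
          \<le> (ennreal \<eta> * (F1 x + F2 x)) * (F1 y + F2 y)" .
    qed
  qed
  also have "\<dots> = (\<integral>\<^sup>+x. (ennreal \<eta> * (F1 x + F2 x)) * ennreal (2 * m) \<partial>lebesgue)"
    by (simp add: nn_integral_cmult IU)
  also have "\<dots> = ennreal \<eta> * ennreal (2 * m) * ennreal (2 * m)"
    by (simp add: nn_integral_multc nn_integral_cmult IU)
  also have "\<dots> = ennreal (4 * \<eta> * m^2)"
    using eta mpos by (simp add: ennreal_mult[symmetric] power2_eq_square mult_ac)
  finally have PPle: "PP \<le> ennreal (4 * \<eta> * m^2)" .
  have "(\<integral>\<^sup>+x. \<integral>\<^sup>+y. ennreal \<delta> * (F1 x * F2 y + F2 x * F1 y) \<partial>lebesgue \<partial>lebesgue) \<le> NN"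
    unfolding NN_def
  proof (rule nn_integral_mono, rule nn_integral_mono)
    fix x y :: "real^2"
    have "ennreal \<delta> * (F1 x * F2 y + F2 x * F1 y) = ennreal (\<delta> * ((u1 x)^2 * (u2 y)^2 + (u2 x)^2 * (u1 y)^2))"
      using del eta by (simp add: F1_def F2_def ennreal_mult ennreal_plus)
    also have "\<dots> \<le> ennreal (Vminus V (norm (x - y)) * (u1 x + u2 x)^2 * (u1 y + u2 y)^2)"
      using lo[of x y] by (intro ennreal_leI)
    finally show "ennreal \<delta> * (F1 x * F2 y + F2 x * F1 y) \<le> ennreal (Vminus V (norm (x - y)) * (u1 x + u2 x)^2 * (u1 y + u2 y)^2)" .
  qed
  moreover have "(\<integral>\<^sup>+x. \<integral>\<^sup>+y. ennreal \<delta> * (F1 x * F2 y + F2 x * F1 y) \<partial>lebesgue \<partial>lebesgue)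
      = (\<integral>\<^sup>+x. ennreal \<delta> * (F1 x * ennreal m + F2 x * ennreal m) \<partial>lebesgue)"
    by (simp add: nn_integral_cmult nn_integral_add IF1 IF2)
  moreover have "\<dots> = ennreal \<delta> * (ennreal m * ennreal m + ennreal m * ennreal m)"
    by (simp add: nn_integral_cmult nn_integral_add nn_integral_multc IF1 IF2)
  moreover have "\<dots> = ennreal (2 * \<delta> * m^2)"
    using del eta mpos by (simp add: ennreal_mult[symmetric] ennreal_plus[symmetric] power2_eq_square mult_ac)
  ultimately have NNge: "ennreal (2 * \<delta> * m^2) \<le> NN" by simp
  have "Pfun V (\<lambda>x. u1 x + u2 x) = enn2ereal PP - enn2ereal NN"
    unfolding Pfun_def PP_def NN_def by simp
  also have "\<dots> < 0"
  proof (rule ereal_fin)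
    have "enn2ereal PP \<le> enn2ereal (ennreal (4 * \<eta> * m^2))"
      using PPle by (simp only: less_eq_ennreal.rep_eq)
    then show "enn2ereal PP \<le> ereal (4 * \<eta> * m^2)" using eta by simp
    have "enn2ereal (ennreal (2 * \<delta> * m^2)) \<le> enn2ereal NN"
      using NNge by (simp only: less_eq_ennreal.rep_eq)
    moreover have "\<delta> > 0" using del eta by simp
    ultimately show "ereal (2 * \<delta> * m^2) \<le> enn2ereal NN" by simp
    show "4 * \<eta> * m^2 < 2 * \<delta> * m^2" using del mpos by simp
  qed simp
  finally show ?thesis .
qed



lemma part_iv:
  fixes V :: "real \<Rightarrow> real"
  assumes cont: "continuous_on {0<..} V"
    and V3: "\<exists>I. open I \<and> I \<noteq> {} \<and> I \<subseteq> {0<..} \<and> (\<forall>t\<in>I. V t < 0)"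
    and Vp0: "(Vplus V \<longlongrightarrow> 0) (at_right 0)"
  shows "\<exists>u0\<in>Xsp. \<not> (AE x in lebesgue. u0 x = 0) \<and> Pfun V u0 < 0"
proof -
  obtain I where I: "open I" "I \<noteq> {}" "I \<subseteq> {0<..}" "\<forall>t\<in>I. V t < 0" using V3 by blast
  obtain r where r: "r \<in> I" using I(2) by blast
  obtain d0 where d0: "d0 > 0" "ball r d0 \<subseteq> I" using open_contains_ball_eq[OF I(1)] r by blast
  define d where "d = d0 / 2"
  have "{r-d..r+d} \<subseteq> ball r d0" using d0 by (auto simp: d_def dist_real_def)
  then have d: "d > 0" "{r-d..r+d} \<subseteq> I" using d0 by (auto simp: d_def)
  have "r - d \<in> I" using d by auto
  then have rd: "r - d > 0" using I(3) by auto
  have "continuous_on {r-d..r+d} V" by (rule continuous_on_subset[OF cont]) (use d I(3) in auto)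
  then obtain s where s: "s \<in> {r-d..r+d}" "\<And>t. t \<in> {r-d..r+d} \<Longrightarrow> V t \<le> V s"
    using continuous_attains_sup[of "{r-d..r+d}" V] d(1) by auto
  define \<delta> where "\<delta> = - V s"
  have \<delta>: "\<delta> > 0" using s(1) d(2) I(4) by (auto simp: \<delta>_def)
  have Vm: "Vminus V t \<ge> \<delta>" "Vplus V t = 0" if "t \<in> {r-d..r+d}" for t
    using s(2)[OF that] d(2) I(4) that by (auto simp: Vminus_def Vplus_def \<delta>_def)
  define \<eta> where "\<eta> = \<delta> / 4"
  have \<eta>: "\<eta> > 0" "2 * \<eta> < \<delta>" using \<delta> by (auto simp: \<eta>_def)
  have "eventually (\<lambda>t. Vplus V t < \<eta>) (at_right 0)"
    using order_tendstoD(2)[OF Vp0 \<eta>(1)] .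
  then obtain b where b: "b > 0" "\<And>t. 0 < t \<Longrightarrow> t < b \<Longrightarrow> Vplus V t < \<eta>"
    by (auto simp: eventually_at_right_field)
  define \<epsilon> where "\<epsilon> = min (b/2) (d/2)"
  have \<epsilon>: "\<epsilon> > 0" "2 * \<epsilon> \<le> b" "2 * \<epsilon> \<le> d" using b d by (auto simp: \<epsilon>_def)
  define q :: "real^2" where "q = r *\<^sub>R axis 1 1"
  have nq: "norm q = r" using rd d by (simp add: q_def)
  define u1 where "u1 = bump 0 \<epsilon>"
  define u2 where "u2 = bump q \<epsilon>"
  have s1: "norm x < \<epsilon>" if "u1 x \<noteq> 0" for x
    using bump_support[of 0 \<epsilon> x] that \<epsilon> by (simp add: u1_def)
  have s2: "norm (x - q) < \<epsilon>" if "u2 x \<noteq> 0" for x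
    using bump_support[of q \<epsilon> x] that \<epsilon> by (simp add: u2_def)
  have same: "norm (x - y) < 2 * \<epsilon>" if "norm (x - c) < \<epsilon>" "norm (y - c) < \<epsilon>" for x y c :: "real^2"
    using norm_triangle_ineq4[of "x - c" "y - c"] that by simp
  have cross: "norm (x - y) \<in> {r-d..r+d}" if "norm x < \<epsilon>" "norm (y - q) < \<epsilon>" for x y
  proof -
    have e1: "x - y = (x - (y - q)) - q" by (simp add: algebra_simps)
    have "norm (x - y) \<le> norm (x - (y - q)) + norm q" by (subst e1) (rule norm_triangle_ineq4)
    moreover have "norm (x - (y - q)) \<le> norm x + norm (y - q)" by (rule norm_triangle_ineq4)
    moreover have e2: "q = (x - (x - y)) - (y - q)" by (simp add: algebra_simps)
    have "norm q \<le> norm (x - (x - y)) + norm (y - q)" by (subst e2) (rule norm_triangle_ineq4)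
    moreover have "norm (x - (x - y)) \<le> norm x + norm (x - y)" by (rule norm_triangle_ineq4)
    ultimately show ?thesis using that nq \<epsilon> by auto
  qed
  have cross': "norm (x - y) \<in> {r-d..r+d}" if "norm (x - q) < \<epsilon>" "norm y < \<epsilon>" for x y
    using cross[OF that(2) that(1)] by (simp add: norm_minus_commute)
  have disj: "u1 x = 0 \<or> u2 x = 0" for x
  proof (rule ccontr)
    assume "\<not> ?thesis"
    then have "norm x < \<epsilon>" "norm (x - q) < \<epsilon>" using s1 s2 by auto
    then have "norm q < 2 * \<epsilon>" using norm_triangle_ineq4[of x "x - q"] by simp
    then show False using nq \<epsilon> rd by simp
  qed
  have Vp_small: "Vplus V (norm (x - y)) \<le> \<eta>" if "x \<noteq> y" "u1 x + u2 x \<noteq> 0" "u1 y + u2 y \<noteq> 0" for x y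
  proof -
    have nz: "norm (x - y) > 0" using that by simp
    have "u1 x \<noteq> 0 \<or> u2 x \<noteq> 0" "u1 y \<noteq> 0 \<or> u2 y \<noteq> 0" using that by auto
    then consider "norm x < \<epsilon>" "norm y < \<epsilon>" | "norm x < \<epsilon>" "norm (y - q) < \<epsilon>"
      | "norm (x - q) < \<epsilon>" "norm y < \<epsilon>" | "norm (x - q) < \<epsilon>" "norm (y - q) < \<epsilon>"
      using s1 s2 by blast
    then show ?thesis
    proof cases
      case 1 then have "norm (x - y) < 2 * \<epsilon>" using same[of x 0 y] by simp
      then show ?thesis using b(2)[OF nz] \<epsilon> by simp
    next
      case 2 then show ?thesis using Vm(2)[OF cross] \<eta> by simp
    next
      case 3 then show ?thesis using Vm(2)[OF cross'] \<eta> by simp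
    next
      case 4 then have "norm (x - y) < 2 * \<epsilon>" using same[of x q y] by simp
      then show ?thesis using b(2)[OF nz] \<epsilon> by simp
    qed
  qed
  have up: "Vplus V (norm (x - y)) * (u1 x + u2 x)^2 * (u1 y + u2 y)^2
                 \<le> \<eta> * (u1 x + u2 x)^2 * (u1 y + u2 y)^2" if "x \<noteq> y" for x y
  proof (cases "u1 x + u2 x = 0 \<or> u1 y + u2 y = 0")
    case True then show ?thesis by auto
  next
    case False
    then have "Vplus V (norm (x - y)) \<le> \<eta>" using Vp_small that by auto
    then show ?thesis by (intro mult_right_mono) auto
  qed
  have lo: "\<delta> * ((u1 x)^2 * (u2 y)^2 + (u2 x)^2 * (u1 y)^2)
                 \<le> Vminus V (norm (x - y)) * (u1 x + u2 x)^2 * (u1 y + u2 y)^2" for x y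
  proof -
    have Vn0: "Vminus V t \<ge> 0" for t by (simp add: Vminus_def)
    consider "u1 x \<noteq> 0" "u2 y \<noteq> 0" | "u2 x \<noteq> 0" "u1 y \<noteq> 0" | "(u1 x = 0 \<or> u2 y = 0) \<and> (u2 x = 0 \<or> u1 y = 0)"
      by blast
    then show ?thesis
    proof cases
      case 1
      then have "u2 x = 0" "u1 y = 0" using disj by blast+
      moreover have "Vminus V (norm (x - y)) \<ge> \<delta>" using Vm(1)[OF cross] s1 s2 1 by blast
      then have "\<delta> * ((u1 x)^2 * (u2 y)^2) \<le> Vminus V (norm (x - y)) * ((u1 x)^2 * (u2 y)^2)"
        by (rule mult_right_mono) auto
      ultimately show ?thesis by (simp add: mult.assoc)
    next
      case 2
      then have "u1 x = 0" "u2 y = 0" using disj by blast+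
      moreover have "Vminus V (norm (x - y)) \<ge> \<delta>" using Vm(1)[OF cross'] s1 s2 2 by blast
      then have "\<delta> * ((u2 x)^2 * (u1 y)^2) \<le> Vminus V (norm (x - y)) * ((u2 x)^2 * (u1 y)^2)"
        by (rule mult_right_mono) auto
      ultimately show ?thesis by (simp add: mult.assoc)
    next
      case 3
      then have "\<delta> * ((u1 x)^2 * (u2 y)^2 + (u2 x)^2 * (u1 y)^2) = 0" by auto
      moreover have "0 \<le> Vminus V (norm (x - y)) * (u1 x + u2 x)^2 * (u1 y + u2 y)^2"
        by (intro mult_nonneg_nonneg) (auto simp: Vn0)
      ultimately show ?thesis by linarith
    qed
  qed
  have cu1: "continuous_on UNIV u1" by (simp add: u1_def bump_cont)
  have cu2: "continuous_on UNIV u2" by (simp add: u2_def bump_cont)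
  have mu1: "u1 \<in> borel_measurable lebesgue" by (rule cont_lebesgue_meas[OF cu1])
  have mu2: "u2 \<in> borel_measurable lebesgue" by (rule cont_lebesgue_meas[OF cu2])
  have bu2[measurable]: "u2 \<in> borel_measurable borel" by (rule borel_measurable_continuous_onI[OF cu2])
  have bu1[measurable]: "u1 \<in> borel_measurable borel" by (rule borel_measurable_continuous_onI[OF cu1])
  have int1: "integrable lebesgue (\<lambda>x. (u1 x)^2)"
  proof (rule cc_integrable[where R=\<epsilon>])
    show "continuous_on UNIV (\<lambda>x. (u1 x)^2)" by (intro continuous_intros cu1)
    show "(u1 x)^2 = 0" if "\<epsilon> < norm x" for x
      using bump_zero[of \<epsilon> x 0] that \<epsilon> by (simp add: u1_def)
  qed
  define m where "m = integral\<^sup>L lebesgue (\<lambda>x. (u1 x)^2)"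
  have i1: "(\<integral>\<^sup>+x. ennreal ((u1 x)^2) \<partial>lebesgue) = ennreal m"
    unfolding m_def by (rule nn_integral_eq_integral[OF int1]) auto
  have "(\<integral>\<^sup>+x. ennreal ((u2 x)^2) \<partial>lebesgue) = (\<integral>\<^sup>+x. ennreal ((u2 x)^2) \<partial>lborel)"
    by (rule nn_integral_completion)
  also have "\<dots> = (\<integral>\<^sup>+x. ennreal ((u2 (q + x))^2) \<partial>lborel)"
    by (rule nn_integral_translate[symmetric]) measurable
  also have "\<dots> = (\<integral>\<^sup>+x. ennreal ((u1 x)^2) \<partial>lborel)"
    by (simp add: u1_def u2_def bump_def)
  also have "\<dots> = (\<integral>\<^sup>+x. ennreal ((u1 x)^2) \<partial>lebesgue)"
    by (rule nn_integral_completion[symmetric])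
  finally have i2: "(\<integral>\<^sup>+x. ennreal ((u2 x)^2) \<partial>lebesgue) = ennreal m" using i1 by simp
  have ballpos: "emeasure lborel (ball (0::real^2) \<epsilon>) > 0"
    using \<epsilon> by (simp add: emeasure_ball)
  have u1pos: "u1 x > 0" if "x \<in> ball 0 \<epsilon>" for x
    using bump_pos[of x 0 \<epsilon>] that by (simp add: u1_def)
  have mpos: "m > 0"
  proof (rule ccontr)
    assume "\<not> m > 0"
    moreover have "m \<ge> 0" unfolding m_def by (rule integral_nonneg_AE) auto
    ultimately have "m = 0" by simp
    then have "(\<integral>\<^sup>+x. ennreal ((u1 x)^2) \<partial>lebesgue) = 0" using i1 by simp
    then have "AE x in lebesgue. ennreal ((u1 x)^2) = 0"
      by (subst (asm) nn_integral_0_iff_AE) (use mu1 in measurable)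
    moreover have "\<forall>x\<in>ball 0 \<epsilon>. \<not> ennreal ((u1 x)^2) = 0"
    proof
      fix x :: "real^2" assume "x \<in> ball 0 \<epsilon>"
      then have "u1 x > 0" by (rule u1pos)
      then show "\<not> ennreal ((u1 x)^2) = 0" by simp
    qed
    ultimately show False
      by (intro AE_contra[OF _ _ ballpos]) auto
  qed
  have notAE: "\<not> (AE x in lebesgue. u1 x + u2 x = 0)"
  proof
    assume "AE x in lebesgue. u1 x + u2 x = 0"
    then show False
    proof (rule AE_contra[OF _ _ ballpos])
      show "\<forall>x\<in>ball 0 \<epsilon>. \<not> u1 x + u2 x = 0"
        using u1pos bump_nonneg[of q \<epsilon>] by (auto simp: u2_def) (smt (verit))
    qed auto
  qed
  have "Pfun V (\<lambda>x. u1 x + u2 x) < 0"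
    by (rule P_neg[OF mu1 mu2 i1 i2 mpos disj up lo]) (use \<eta> in auto)
  moreover have "(\<lambda>x. u1 x + u2 x) \<in> Xsp"
    using u_in_Xsp[OF \<epsilon>(1), of q] by (simp add: u1_def u2_def)
  ultimately show ?thesis using notAE by (intro bexI[of _ "\<lambda>x. u1 x + u2 x"]) auto
qed

theorem lemma3p3:
  fixes V a1 a2 a3 :: "real \<Rightarrow> real"
  assumes cont: "continuous_on {0<..} V"
    and V1_a2: "Linf_pos a2"
    and V1_a1_inf: "\<exists>c>0. \<forall>t\<ge>2. a1 t \<ge> c"
    and V1_a2_inf: "\<exists>c>0. \<forall>t>0. a2 t \<ge> c"
    and V1: "\<forall>t>0. a1 t * ln (1 + t) \<le> Vplus V t \<and> Vplus V t \<le> a2 t * ln (1 + t)"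
    and V2_pos: "\<exists>S\<in>sets lebesgue. S \<subseteq> {0<..} \<and> emeasure lebesgue S > 0 \<and> (\<forall>t\<in>S. a3 t > 0)"
    and V2: "\<forall>t>0. Vminus V t \<le> a3 t / t"
    and V2_a3: "Linf_pos a3 \<or> (\<exists>lam::real. 1 \<le> lam \<and> lam < 3 \<and> (\<forall>t>0. a3 t = t powr (- lam)))"
    and V3: "\<exists>I. open I \<and> I \<noteq> {} \<and> I \<subseteq> {0<..} \<and> (\<forall>t\<in>I. V t < 0)"
  shows "filterlim (Vplus V) at_top at_top \<and> (Vplus V \<longlongrightarrow> 0) (at_right 0)
     \<and> (Vminus V \<longlongrightarrow> 0) at_top
     \<and> filterlim V at_top at_top
     \<and> (\<exists>u0\<in>Xsp. \<not> (AE x in lebesgue. u0 x = 0) \<and> Pfun V u0 < 0)"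
proof -
  have top: "filterlim (Vplus V) at_top at_top"
    by (rule part_i_top[OF V1_a1_inf]) (use V1 in auto)
  obtain M where M: "\<forall>t>0. Vplus V t \<le> M * ln (1 + t)"
    using Vplus_le_M[OF cont V1_a2] V1 by auto
  have zero: "(Vplus V \<longlongrightarrow> 0) (at_right 0)" by (rule part_i_zero[OF M])
  have ii: "(Vminus V \<longlongrightarrow> 0) at_top \<and> filterlim V at_top at_top" by (rule part_ii_iii[OF top])
  have iv: "\<exists>u0\<in>Xsp. \<not> (AE x in lebesgue. u0 x = 0) \<and> Pfun V u0 < 0" by (rule part_iv[OF cont V3 zero])
  show ?thesis using top zero ii iv by blast
qed

end
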